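(* Let $0<q<\infty$ and $\frac{q}{q+1}<p<\infty$, and let $r=\frac{pq}{pq+p-q}$. Then $$\frac{\sin_{p,q}x}{x}<\left(\frac{p+r\cos_{p,q}^p x}{p+r}\right)^{1/q} \quad \text{for all } x\in\left(0,\tfrac{\pi_{p,q}}{2}\right),$$ and $$\frac{\sinh_{p,q}x}{x}<\left(\frac{p+r\cosh_{p,q}^p x}{p+r}\right)^{1/q} \quad \text{for all } x\in\left(0,\tfrac{\pi_{r,q}}{2}\right).$$
   Context: For $0<q<\infty$ and $\frac{q}{q+1}<p<\infty$: let $F_{p,q}(y)=\int_0^y (1-t^q)^{-1/p}\,dt$ for $y\in[0,1)$ and $\pi_{p,q}=2\int_0^1(1-t^q)^{-1/p}\,dt\in(0,\infty]$ (it equals $\infty$ when $p\le 1$). The function $\sin_{p,q}:[0,\pi_{p,q}/2)\to[0,1)$ is the inverse of $F_{p,q}$ and $\cos_{p,q}x=\frac{d}{dx}\sin_{p,q}x$. Let $G_{p,q}(y)=\int_0^y(1+t^q)^{-1/p}\,dt$ for $y\in[0,\infty)$; its range is $[0,\pi_{r,q}/2)$ with $r=\frac{pq}{pq+p-q}$ (which also satisfies $\frac{q}{q+1}<r<\infty$). The function $\sinh_{p,q}:[0,\pi_{r,q}/2)\to[0,\infty)$ is the inverse of $G_{p,q}$ and $\cosh_{p,q}x=\frac{d}{dx}\sinh_{p,q}x$. *)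

theory Defs
  imports "HOL-Analysis.Analysis"
begin

definition F_pq :: "real \<Rightarrow> real \<Rightarrow> real \<Rightarrow> real" where
  "F_pq p q y = integral {0..y} (\<lambda>t. (1 - t powr q) powr (- 1 / p))"

text \<open>pi_{p,q} = 2 * (improper) integral from 0 to 1, as an extended real (may be infinite).
  The improper integral of the nonnegative integrand is the supremum of F_{p,q} over [0,1).\<close>
definition pi_pq :: "real \<Rightarrow> real \<Rightarrow> ereal" where
  "pi_pq p q = 2 * (SUP y\<in>{0..<1}. ereal (F_pq p q y))"

definition sin_pq :: "real \<Rightarrow> real \<Rightarrow> real \<Rightarrow> real" where
  "sin_pq p q x = (THE y. y \<in> {0..<1} \<and> F_pq p q y = x)"

definition cos_pq :: "real \<Rightarrow> real \<Rightarrow> real \<Rightarrow> real" where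
  "cos_pq p q x = deriv (sin_pq p q) x"

definition G_pq :: "real \<Rightarrow> real \<Rightarrow> real \<Rightarrow> real" where
  "G_pq p q y = integral {0..y} (\<lambda>t. (1 + t powr q) powr (- 1 / p))"

definition sinh_pq :: "real \<Rightarrow> real \<Rightarrow> real \<Rightarrow> real" where
  "sinh_pq p q x = (THE y. 0 \<le> y \<and> G_pq p q y = x)"

definition cosh_pq :: "real \<Rightarrow> real \<Rightarrow> real \<Rightarrow> real" where
  "cosh_pq p q x = deriv (sinh_pq p q) x"

end

theory Submission
  imports Defs
begin


lemma intfun_deriv:
  fixes f :: "real \<Rightarrow> real"
  assumes "continuous_on {0..b} f" "0 < y" "y < b"
  shows "((\<lambda>x. integral {0..x} f) has_real_derivative f y) (at y)"
proof -
  have yin: "y \<in> {0..b}" using assms(2,3) by simp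
  have d: "((\<lambda>x. integral {0..x} f) has_real_derivative f y) (at y within {0..b})"
    by (rule integral_has_real_derivative[OF assms(1) yin])
  have "y \<in> interior {0..b}" using assms(2,3) by simp
  then have "at y within {0..b} = at y" by (rule at_within_interior)
  then show ?thesis using d by simp
qed

lemma intfun_cont:
  fixes f :: "real \<Rightarrow> real"
  assumes "continuous_on {0..b} f"
  shows "continuous_on {0..b} (\<lambda>x. integral {0..x} f)"
  by (rule indefinite_integral_continuous_1, rule integrable_continuous_real, rule assms)

lemma pw_lt1: fixes y q :: real assumes "0 \<le> y" "y < 1" "0 < q" shows "y powr q < 1"
  using powr_less_mono2[of q y 1] assms by simp

lemma cont_tq:
  fixes q b :: real
  assumes "0 < q"
  shows "continuous_on {0..b} (\<lambda>t. t powr q)"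
proof -
  have ci: "continuous_on {0..b} (\<lambda>x::real. x)" by (intro continuous_intros)
  then show ?thesis using continuous_on_powr'[OF ci continuous_on_const[of "{0..b}" q]] assms by simp
qed

lemma cont_F_int:
  fixes p q b :: real
  assumes "0 < q" "b < 1"
  shows "continuous_on {0..b} (\<lambda>t. (1 - t powr q) powr (- 1 / p))"
proof -
  have h: "\<forall>t\<in>{0..b}. 0 < 1 - t powr q"
  proof
    fix t :: real assume "t \<in> {0..b}"
    then have "t powr q < 1" using pw_lt1[of t q] assms by simp
    then show "0 < 1 - t powr q" by simp
  qed
  have cb: "continuous_on {0..b} (\<lambda>t. 1 - t powr q)"
    by (rule continuous_on_diff[OF continuous_on_const cont_tq[OF assms(1)]])
  show ?thesis
  proof (rule continuous_on_powr'[OF cb continuous_on_const])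
    show "\<forall>x\<in>{0..b}. 0 \<le> 1 - x powr q \<and> (1 - x powr q = 0 \<longrightarrow> 0 < - 1 / p)"
    proof
      fix x assume "x \<in> {0..b}"
      then have "0 < 1 - x powr q" using h by blast
      then show "0 \<le> 1 - x powr q \<and> (1 - x powr q = 0 \<longrightarrow> 0 < - 1 / p)" by simp
    qed
  qed
qed

lemma cont_G_int:
  fixes p q b :: real
  assumes "0 < q"
  shows "continuous_on {0..b} (\<lambda>t. (1 + t powr q) powr (- 1 / p))"
proof -
  have h: "0 < 1 + t powr q" for t :: real
  proof -
    have "0 \<le> t powr q" by simp
    then show ?thesis by linarith
  qed
  have cb: "continuous_on {0..b} (\<lambda>t. 1 + t powr q)"
    by (rule continuous_on_add[OF continuous_on_const cont_tq[OF assms(1)]])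
  show ?thesis
  proof (rule continuous_on_powr'[OF cb continuous_on_const])
    show "\<forall>x\<in>{0..b}. 0 \<le> 1 + x powr q \<and> (1 + x powr q = 0 \<longrightarrow> 0 < - 1 / p)"
    proof
      fix x assume "x \<in> {0..b}"
      then have "0 < 1 + x powr q" using h by blast
      then show "0 \<le> 1 + x powr q \<and> (1 + x powr q = 0 \<longrightarrow> 0 < - 1 / p)" by simp
    qed
  qed
qed

lemma inv_fun:
  fixes \<Phi> \<phi> \<psi> :: "real \<Rightarrow> real" and S :: "real set"
  assumes S0: "0 \<in> S" and Snn: "\<forall>y\<in>S. 0 \<le> y" and Sdown: "\<forall>y\<in>S. \<forall>z. 0 \<le> z \<and> z \<le> y \<longrightarrow> z \<in> S"
    and Sopen: "\<forall>y\<in>S. \<exists>z\<in>S. y < z"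
    and D: "\<forall>y\<in>S. 0 < y \<longrightarrow> (\<Phi> has_real_derivative \<phi> y) (at y)"
    and C: "\<forall>y\<in>S. continuous_on {0..y} \<Phi>"
    and pos: "\<forall>y\<in>S. 0 < \<phi> y"
    and Z: "\<Phi> 0 = 0"
    and psi: "\<And>x. \<psi> x = (THE y. y \<in> S \<and> \<Phi> y = x)"
    and x: "0 < x" "ya \<in> S" "x < \<Phi> ya"
  shows "\<psi> x \<in> S \<and> 0 < \<psi> x \<and> \<Phi> (\<psi> x) = x \<and> deriv \<psi> x = 1 / \<phi> (\<psi> x)"
proof -
  have mono: "\<Phi> y < \<Phi> z" if "y \<in> S" "z \<in> S" "y < z" for y z
  proof (rule DERIV_pos_imp_increasing_open[OF \<open>y < z\<close>])
    fix t assume t: "y < t" "t < z"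
    have "0 \<le> y" using Snn that(1) by blast
    then have t0: "0 < t" using t by linarith
    have "0 \<le> t" "t \<le> z" using t0 t by auto
    then have "t \<in> S" using Sdown that(2) by blast
    note tt = this t0
    then show "\<exists>d. (\<Phi> has_real_derivative d) (at t) \<and> 0 < d" using D pos tt by blast
  next
    have "0 \<le> y" using Snn that(1) by blast
    then have "{y..z} \<subseteq> {0..z}" by auto
    moreover have "continuous_on {0..z} \<Phi>" using C that(2) by blast
    ultimately show "continuous_on {y..z} \<Phi>" using continuous_on_subset by blast
  qed
  have uniq: "y = z" if "y \<in> S" "z \<in> S" "\<Phi> y = \<Phi> z" for y z
  proof (rule ccontr)
    assume "y \<noteq> z"
    then consider "y < z" | "z < y" by linarith
    then show False
    proof cases
      case 1 then show False using mono[OF that(1,2)] that(3) by simp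
    next
      case 2 then show False using mono[OF that(2,1)] that(3) by simp
    qed
  qed
  have psi_eq: "\<psi> (\<Phi> y) = y" if "y \<in> S" for y
    unfolding psi
  proof (rule the_equality)
    show "y \<in> S \<and> \<Phi> y = \<Phi> y" using that by simp
    fix w assume "w \<in> S \<and> \<Phi> w = \<Phi> y"
    then show "w = y" using uniq that by blast
  qed
  have ex: "\<exists>y\<in>S. \<Phi> y = x' \<and> \<psi> x' = y" if "0 < x'" "x' < \<Phi> ya" for x'
  proof -
    have y10: "0 \<le> ya" using Snn x(2) by blast
    have c: "continuous_on {0..ya} \<Phi>" using C x(2) by blast
    have l: "\<Phi> 0 \<le> x'" using Z that(1) by simp
    have u: "x' \<le> \<Phi> ya" using that(2) by simp
    obtain y where y: "0 \<le> y" "y \<le> ya" "\<Phi> y = x'"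
      using IVT'[OF l u y10 c] by blast
    then have "y \<in> S" using Sdown x(2) by blast
    then show ?thesis using y psi_eq by auto
  qed
  obtain y0 where y0: "y0 \<in> S" "\<Phi> y0 = x" "\<psi> x = y0" using ex x by blast
  have y0pos: "0 < y0"
  proof -
    have "0 \<le> y0" using Snn y0(1) by blast
    moreover have "y0 \<noteq> 0" using y0(2) Z x(1) by auto
    ultimately show ?thesis by simp
  qed
  obtain z' where z': "z' \<in> S" "y0 < z'" using Sopen y0 by blast
  define d where "d = min y0 (z' - y0) / 2"
  have dpos: "0 < d" using y0pos z' by (simp add: d_def)
  have inS: "z \<in> S" "0 < z" if "\<bar>z - y0\<bar> \<le> d" for z
  proof -
    have d1: "2 * d \<le> y0" "2 * d \<le> z' - y0" unfolding d_def by auto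
    have "z - y0 \<le> d" "y0 - z \<le> d" using that by (auto simp: abs_le_iff)
    then have z0: "0 < z" "z \<le> z'" using d1 y0pos z'(2) by linarith+
    then have "0 \<le> z" by simp
    then show "z \<in> S" using Sdown z'(1) z0(2) by blast
    show "0 < z" by (rule z0(1))
  qed
  have cont: "isCont \<psi> (\<Phi> y0)"
  proof (rule isCont_inverse_function[where f="\<Phi>" and g="\<psi>" and x=y0, OF dpos])
    fix z assume "\<bar>z - y0\<bar> \<le> d"
    then show "\<psi> (\<Phi> z) = z" using inS psi_eq by blast
  next
    fix z assume "\<bar>z - y0\<bar> \<le> d"
    then show "isCont \<Phi> z" using inS D by (meson DERIV_isCont)
  qed
  have "(\<psi> has_real_derivative inverse (\<phi> y0)) (at x)"
  proof (rule DERIV_inverse_function[where a=0 and b="\<Phi> ya"])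
    show "(\<Phi> has_real_derivative \<phi> y0) (at (\<psi> x))" using D y0 y0pos by auto
    have "0 < \<phi> y0" using pos y0(1) by blast
    then show "\<phi> y0 \<noteq> 0" by simp
    show "0 < x" "x < \<Phi> ya" using x by auto
    show "\<Phi> (\<psi> y) = y" if "0 < y" "y < \<Phi> ya" for y using ex[OF that] by auto
    show "isCont \<psi> x" using cont y0 by simp
  qed
  then have "deriv \<psi> x = 1 / \<phi> y0" by (simp add: DERIV_imp_deriv divide_inverse)
  then show ?thesis using y0 y0pos by auto
qed



lemma g_deriv:
  fixes c q t :: real
  assumes "0 < q" "0 < t" "0 < 1 - c * t powr q"
  shows "((\<lambda>t. t * (1 - c * t powr q) powr (-1/q)) has_real_derivative
           (1 - c * t powr q) powr (-1/q - 1)) (at t)"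
proof -
  define A where "A = 1 - c * t powr q"
  define E where "E = A powr (-1/q - 1)"
  have d1: "((\<lambda>t. t powr q) has_real_derivative q * t powr (q-1)) (at t)"
    using has_real_derivative_powr assms by blast
  have d2: "((\<lambda>t. 1 - c * t powr q) has_real_derivative -(c*(q * t powr (q-1)))) (at t)"
    using DERIV_diff[OF DERIV_const DERIV_cmult[OF d1]] by simp
  have d3: "((\<lambda>t. (1 - c * t powr q) powr (-1/q)) has_real_derivative
       (-1/q) * (1 - c * t powr q) powr (-1/q - of_nat 1) * (-(c*(q * t powr (q-1))))) (at t)"
    using DERIV_fun_powr[OF d2] assms by blast
  note d4 = DERIV_mult[OF DERIV_ident d3]
  have Apos: "0 < A" using assms by (simp add: A_def)
  have e1: "A powr (-1/q) = A * E"
  proof -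
    have "A powr (-1/q) = A powr (1 + (-1/q - 1))" by simp
    also have "\<dots> = A powr 1 * E" unfolding E_def by (rule powr_add)
    finally show ?thesis using Apos by simp
  qed
  define T where "T = t powr (q-1)"
  have e2: "t powr q = t * T"
  proof -
    have "t powr q = t powr (1 + (q - 1))" by simp
    also have "\<dots> = t powr 1 * T" unfolding T_def by (rule powr_add)
    finally show ?thesis using assms(2) by simp
  qed
  have e3: "(-1/q) * E * (-(c*(q * T))) * t = c * E * (t * T)"
    using assms(1) by (simp add: field_simps)
  have e4: "A * E + c * E * (t * T) = E"
  proof -
    have "A * E + c * E * (t * T) = E * (A + c * (t * T))" by (simp add: algebra_simps)
    also have "A + c * (t * T) = 1" unfolding A_def e2 by simp
    finally show ?thesis by simp
  qed
  have X: "1 * (1 - c * t powr q) powr (-1/q) + (-1/q) * (1 - c * t powr q) powr (-1/q - of_nat 1) * (-(c*(q * t powr (q-1)))) * t = E"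
  proof -
    have "(1 - c * t powr q) powr (-1/q - of_nat 1) = E" by (simp add: E_def A_def)
    moreover have "(1 - c * t powr q) powr (-1/q) = A * E" using e1 by (simp add: A_def)
    ultimately have "1 * (1 - c * t powr q) powr (-1/q) + (-1/q) * (1 - c * t powr q) powr (-1/q - of_nat 1) * (-(c*(q * t powr (q-1)))) * t
        = A * E + (-1/q) * E * (-(c*(q * T))) * t" by (simp only: T_def mult_1)
    then show ?thesis using e3 e4 by metis
  qed
  show ?thesis using DERIV_cong[OF d4 X] unfolding E_def A_def .
qed

lemma key_ineq:
  fixes p q c w :: real
  assumes "0 < p" "0 < q" "0 < c" "c < 1" "c * (1 + 1/q) = 1/p" "w \<noteq> 0" "w < 1"
  shows "(1 - c*w) powr (-1/q-1) < (1 - w) powr (-1/p)"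
proof -
  have pos: "0 < 1 - c * v" "0 < 1 - v" if "v < 1" for v
  proof -
    show "0 < 1 - v" using that by simp
    show "0 < 1 - c * v"
    proof (cases "v \<le> 0")
      case True
      have "c * v \<le> 0" using True assms(3) by (intro mult_nonneg_nonpos) auto
      then show ?thesis by linarith
    next
      case False
      have "c * v < 1 * v" using False assms(4) by (intro mult_strict_right_mono) auto
      then show ?thesis using that by linarith
    qed
  qed
  define ff where "ff v = (1 + 1/q) * ln (1 - c * v) - (1/p) * ln (1 - v)" for v
  have der: "DERIV ff v :> (1/p) * (v * (1 - c) / ((1 - v) * (1 - c * v)))" if "v < 1" for v
  proof -
    have "DERIV ff v :> (1 + 1/q) * (-c / (1 - c * v)) - (1/p) * (-1 / (1 - v))"
      unfolding ff_def using pos[OF that]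
      using assms(1) by (auto intro!: derivative_eq_intros simp: mult_ac)
    moreover have "(1 + 1/q) * (-c / (1 - c * v)) - (1/p) * (-1 / (1 - v)) = (1/p) * (v * (1 - c) / ((1 - v) * (1 - c * v)))"
    proof -
      have h1: "(1 + 1/q) * (-c / (1 - c * v)) = - (1/p) / (1 - c * v)"
        using assms(5) by (simp add: mult.commute)
      have h2: "1 / (1 - v) - 1 / (1 - c * v) = v * (1 - c) / ((1 - v) * (1 - c * v))"
        using pos[OF that] by (simp add: field_simps)
      have "(1 + 1/q) * (-c / (1 - c * v)) - (1/p) * (-1 / (1 - v)) = (1/p) * (1 / (1 - v) - 1 / (1 - c * v))"
        unfolding h1 by (simp add: algebra_simps)
      then show ?thesis using h2 by simp
    qed
    ultimately show ?thesis by simp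
  qed
  have cont: "continuous_on {a..b} ff" if "b < 1" for a b
  proof (rule continuous_at_imp_continuous_on, intro ballI)
    fix x assume "x \<in> {a..b}"
    then have "x < 1" using that by simp
    show "isCont ff x" by (rule DERIV_isCont[OF der[OF \<open>x < 1\<close>]])
  qed
  have "ff 0 < ff w"
  proof (cases "0 < w")
    case True
    show ?thesis
    proof (rule DERIV_pos_imp_increasing_open[OF True _ cont[OF assms(7)]])
      fix v assume v: "0 < v" "v < w"
      then have "v < 1" using assms(7) by simp
      have "0 < (1/p) * (v * (1 - c) / ((1 - v) * (1 - c * v)))" using pos[OF \<open>v<1\<close>] v assms(1,4)
        by (intro mult_pos_pos divide_pos_pos) auto
      then show "\<exists>y. DERIV ff v :> y \<and> 0 < y" using der[OF \<open>v<1\<close>] by blast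
    qed
  next
    case False
    then have w0: "w < 0" using assms(6) by simp
    show ?thesis
    proof (rule DERIV_neg_imp_decreasing_open[OF w0 _ cont])
      fix v assume v: "w < v" "v < 0"
      then have "v < 1" using assms(7) by simp
      have "v * (1 - c) / ((1 - v) * (1 - c * v)) < 0" using v pos[OF \<open>v<1\<close>] assms(4)
        by (intro divide_neg_pos mult_neg_pos) auto
      then have "(1/p) * (v * (1 - c) / ((1 - v) * (1 - c * v))) < 0" using assms(1)
        by (intro mult_pos_neg) auto
      then show "\<exists>y. DERIV ff v :> y \<and> y < 0" using der[OF \<open>v<1\<close>] by blast
    qed simp
  qed
  then have "(1/p) * ln (1 - w) < (1 + 1/q) * ln (1 - c*w)" by (simp add: ff_def)
  then have "(-1/q-1) * ln (1 - c*w) < (-1/p) * ln (1 - w)" by (simp add: algebra_simps)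
  then show ?thesis using pos[OF assms(7)] by (simp add: powr_def)
qed


lemma half_ereal: "(2 * X) / (2::ereal) = X"
  by (cases X) auto
lemma g_cont:
  fixes q c b :: real
  assumes "0 < q" "\<forall>t\<in>{0..b}. 0 < 1 - c * t powr q"
  shows "continuous_on {0..b} (\<lambda>t. t * (1 - c * t powr q) powr (-1/q))"
proof -
  have c1: "continuous_on {0..b} (\<lambda>t. t powr q)"
    using assms by (intro continuous_on_powr' continuous_intros) auto
  show ?thesis using assms
    by (intro continuous_intros continuous_on_powr' c1) auto
qed

lemma fin:
  fixes y A X q :: real
  assumes "0 < y" "0 < A" "y * A powr (-1/q) < X"
  shows "y / X < A powr (1/q)"
proof -
  have gpos: "0 < y * A powr (-1/q)" using assms by simp
  have "0 < X" using gpos assms(3) by linarith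
  have "y / X < y / (y * A powr (-1/q))"
    using assms gpos \<open>0 < X\<close> by (intro divide_strict_left_mono mult_pos_pos) auto
  also have "\<dots> = A powr (1/q)" using assms by (simp add: powr_minus divide_inverse)
  finally show ?thesis .
qed

lemma comp:
  fixes \<Phi> \<phi> :: "real \<Rightarrow> real" and q c y :: real
  assumes "0 < y" "0 < q" "continuous_on {0..y} \<Phi>" "\<Phi> 0 = 0"
    and D: "\<And>t. 0 < t \<Longrightarrow> t < y \<Longrightarrow> (\<Phi> has_real_derivative \<phi> t) (at t)"
    and L: "\<And>t. 0 < t \<Longrightarrow> t < y \<Longrightarrow> (1 - c * t powr q) powr (-1/q-1) < \<phi> t"
    and P: "\<forall>t\<in>{0..y}. 0 < 1 - c * t powr q"
    and gc: "continuous_on {0..y} (\<lambda>t. t * (1 - c * t powr q) powr (-1/q))"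
    and gd: "\<And>t. 0 < t \<Longrightarrow> 0 < 1 - c * t powr q \<Longrightarrow> ((\<lambda>t. t * (1 - c * t powr q) powr (-1/q)) has_real_derivative
           (1 - c * t powr q) powr (-1/q - 1)) (at t)"
  shows "y * (1 - c * y powr q) powr (-1/q) < \<Phi> y"
proof -
  define h where "h t = \<Phi> t - t * (1 - c * t powr q) powr (-1/q)" for t
  have "h 0 < h y"
  proof (rule DERIV_pos_imp_increasing_open[OF assms(1)])
    fix t assume t: "0 < t" "t < y"
    have "(h has_real_derivative \<phi> t - (1 - c * t powr q) powr (-1/q - 1)) (at t)"
      unfolding h_def using t P by (intro DERIV_diff D gd) auto
    moreover have "0 < \<phi> t - (1 - c * t powr q) powr (-1/q - 1)" using L[OF t] by simp
    ultimately show "\<exists>d. (h has_real_derivative d) (at t) \<and> 0 < d" by blast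
  next
    show "continuous_on {0..y} h" unfolding h_def by (rule continuous_on_diff[OF assms(3) gc])
  qed
  then show ?thesis using assms(4) by (simp add: h_def)
qed

lemma cw_pos: fixes c u :: real assumes "0 < c" "c < 1" "0 \<le> u" "u < 1" shows "0 < 1 - c * u"
proof -
  have "c * u \<le> 1 * u" using assms by (intro mult_right_mono) auto
  then show ?thesis using assms by linarith
qed

lemma subst_calc:
  fixes t q p r :: real
  assumes "0 < t" "0 < q" "0 < 1 - t powr q" "-1/r = 1/p + (-1/q - 1)"
  shows "(1 + (t * (1 - t powr q) powr (-1/q)) powr q) powr (-1/p) * (1 - t powr q) powr (-1/q - 1)
         = (1 - t powr q) powr (-1/r)"
proof -
  define B where "B = 1 - t powr q"
  have B0: "0 < B" using assms by (simp add: B_def)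
  have "(t * B powr (-1/q)) powr q = t powr q * (B powr (-1/q)) powr q"
    using assms B0 by (simp add: powr_mult)
  also have "\<dots> = t powr q * B powr (-1)" using assms by (simp add: powr_powr)
  also have "\<dots> = t powr q / B" using B0 by (simp add: powr_minus divide_inverse)
  finally have e1: "(t * B powr (-1/q)) powr q = t powr q / B" .
  have "1 + t powr q / B = 1 / B" using B0 by (simp add: B_def field_simps)
  then have "(1 + (t * B powr (-1/q)) powr q) powr (-1/p) = (1/B) powr (-1/p)" using e1 by simp
  also have "\<dots> = 1 / B powr (-1/p)" using B0 by (simp add: powr_divide)
  also have "\<dots> = B powr (1/p)" using B0 by (simp add: powr_minus divide_inverse)
  finally have e2: "(1 + (t * B powr (-1/q)) powr q) powr (-1/p) = B powr (1/p)" .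
  have "B powr (1/p) * B powr (-1/q - 1) = B powr (-1/r)"
    using assms(4) by (simp flip: powr_add)
  then show ?thesis using e2 by (simp add: B_def)
qed

theorem theorem3p5:
  fixes p q r :: real
  assumes "0 < q" and "q / (q + 1) < p"
    and r_def: "r = p * q / (p * q + p - q)"
  shows "(\<forall>x. 0 < x \<and> ereal x < pi_pq p q / 2 \<longrightarrow>
            sin_pq p q x / x < ((p + r * (cos_pq p q x) powr p) / (p + r)) powr (1 / q))
       \<and> (\<forall>x. 0 < x \<and> ereal x < pi_pq r q / 2 \<longrightarrow>
            sinh_pq p q x / x < ((p + r * (cosh_pq p q x) powr p) / (p + r)) powr (1 / q))"
proof -
  have q1: "0 < q + 1" using assms(1) by simp
  have qp: "q < p * (q + 1)" using assms(2) q1 by (simp add: divide_less_eq)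
  have p0: "0 < p"
  proof -
    have "0 < q / (q + 1)" using assms(1) q1 by simp
    then show ?thesis using assms(2) by linarith
  qed
  have Dpos: "0 < p * q + p - q" using qp by (simp add: algebra_simps)
  have r0: "0 < r" unfolding r_def using Dpos p0 assms(1) by simp
  have rD: "r * (p * q + p - q) = p * q" unfolding r_def using Dpos by simp
  define c where "c = r / (p + r)"
  have c0: "0 < c" unfolding c_def using p0 r0 by simp
  have c1: "c < 1" unfolding c_def using p0 r0 by simp
  have e: "r * (q + 1) * p = q * (p + r)"
  proof -
    have "r * (q + 1) * p - q * (p + r) = r * (p * q + p - q) - p * q" by (simp add: algebra_simps)
    then show ?thesis using rD by simp
  qed
  have cK: "c * (1 + 1/q) = 1/p"
  proof -
    have "c * (1 + 1/q) = r * (q + 1) / ((p + r) * q)" unfolding c_def using assms(1) by (simp add: field_simps)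
    also have "\<dots> = r * (q + 1) * p / ((p + r) * q * p)" using p0 by simp
    also have "\<dots> = 1 / p" unfolding e using p0 r0 assms(1) by simp
    finally show ?thesis .
  qed
  have rinv: "-1/r = 1/p + (-1/q - 1)"
  proof -
    have "1/r = (p * q + p - q) / (p * q)" unfolding r_def by simp
    also have "\<dots> = 1 + 1/q - 1/p" using p0 assms(1) by (simp add: field_simps)
    finally have h: "1/r = 1 + 1/q - 1/p" .
    have "-1/r = -(1/r)" "-1/q = -(1/q)" by simp_all
    then show ?thesis using h by linarith
  qed
  have Aeq: "(p + r * (1 + s * u)) / (p + r) = 1 + s * c * u" for s u
  proof -
    have "p + r \<noteq> 0" using p0 r0 by simp
    then show ?thesis unfolding c_def by (simp add: field_simps)
  qed
  have FF: "(\<forall>y\<in>{0..<1}. 0 < y \<longrightarrow> (F_pq pp q has_real_derivative (1 - y powr q) powr (-1/pp)) (at y))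
      \<and> (\<forall>y\<in>{0..<1}. continuous_on {0..y} (F_pq pp q)) \<and> F_pq pp q 0 = 0
      \<and> (\<forall>y\<in>{0..<1}. 0 < (1 - y powr q) powr (-1/pp))" for pp
  proof -
    have Fdef: "F_pq pp q = (\<lambda>x. integral {0..x} (\<lambda>t. (1 - t powr q) powr (- 1 / pp)))"
      by (rule ext) (simp add: F_pq_def)
    have "(F_pq pp q has_real_derivative (1 - y powr q) powr (-1/pp)) (at y)" if "y \<in> {0..<1}" "0 < y" for y
      unfolding Fdef using that assms(1)
      by (intro intfun_deriv[OF cont_F_int[where q=q and p=pp and b="(y+1)/2"]]) auto
    moreover have "continuous_on {0..y} (F_pq pp q)" if "y \<in> {0..<1}" for y
      unfolding Fdef using that assms(1) by (intro intfun_cont cont_F_int) auto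
    moreover have "0 < (1 - y powr q) powr (-1/pp)" if "y \<in> {0..<1}" for y
      using pw_lt1[of y q] that assms(1) by simp
    ultimately show ?thesis by (simp add: F_pq_def)
  qed
  have GG: "(\<forall>y\<in>{0..}. 0 < y \<longrightarrow> (G_pq p q has_real_derivative (1 + y powr q) powr (-1/p)) (at y))
      \<and> (\<forall>y\<in>{0..}. continuous_on {0..y} (G_pq p q)) \<and> G_pq p q 0 = 0
      \<and> (\<forall>y\<in>{0..}. 0 < (1 + y powr q) powr (-1/p))"
  proof -
    have Gdef: "G_pq p q = (\<lambda>x. integral {0..x} (\<lambda>t. (1 + t powr q) powr (- 1 / p)))"
      by (rule ext) (simp add: G_pq_def)
    have "(G_pq p q has_real_derivative (1 + y powr q) powr (-1/p)) (at y)" if "y \<in> {0..}" "0 < y" for y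
      unfolding Gdef using that assms(1)
      by (intro intfun_deriv[OF cont_G_int[where q=q and p=p and b="y+1"]]) auto
    moreover have "continuous_on {0..y} (G_pq p q)" if "y \<in> {0..}" for y
      unfolding Gdef using that assms(1) by (intro intfun_cont cont_G_int) auto
    moreover have "0 < (1 + y powr q) powr (-1/p)" for y
    proof -
      have "0 \<le> y powr q" by simp
      then have "0 < 1 + y powr q" by linarith
      then show ?thesis by simp
    qed
    ultimately show ?thesis by (simp add: G_pq_def)
  qed
  have Sop1: "\<forall>y\<in>{0..<1::real}. \<exists>z\<in>{0..<1}. y < z"
  proof (intro ballI)
    fix y :: real assume "y \<in> {0..<1}"
    then show "\<exists>z\<in>{0..<1}. y < z" by (intro bexI[of _ "(y + 1)/2"]) auto
  qed
  have Sop2: "\<forall>y\<in>{(0::real)..}. \<exists>z\<in>{0..}. y < z"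
  proof (intro ballI)
    fix y :: real assume "y \<in> {0..}"
    then show "\<exists>z\<in>{0..}. y < z" by (intro bexI[of _ "y + 1"]) auto
  qed
  show ?thesis
  proof (intro conjI allI impI)
    fix x assume x: "0 < x \<and> ereal x < pi_pq p q / 2"
    moreover have "pi_pq p q / 2 = (SUP y\<in>{0..<1}. ereal (F_pq p q y))"
      unfolding pi_pq_def by (rule half_ereal)
    ultimately have "ereal x < (SUP y\<in>{0..<1}. ereal (F_pq p q y))" by simp
    then obtain y1 where y1: "y1 \<in> {0..<1}" "x < F_pq p q y1" by (auto simp: less_SUP_iff)
    have inv: "sin_pq p q x \<in> {0..<1} \<and> 0 < sin_pq p q x \<and> F_pq p q (sin_pq p q x) = x
       \<and> deriv (sin_pq p q) x = 1 / (1 - sin_pq p q x powr q) powr (-1/p)"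
    proof (rule inv_fun[where S="{0..<1}" and \<Phi>="F_pq p q" and \<psi>="sin_pq p q" and x=x and ya=y1 and \<phi>="\<lambda>t. (1 - t powr q) powr (-1/p)"])
    qed (use Sop1 FF[of p] x y1 in \<open>auto simp: sin_pq_def\<close>)
    define y where "y = sin_pq p q x"
    have y: "0 \<le> y" "y < 1" "0 < y" "F_pq p q y = x" using inv by (auto simp: y_def)
    have B0: "0 < 1 - y powr q" using pw_lt1[of y q] y assms(1) by simp
    have "cos_pq p q x powr p = ((1 - y powr q) powr (1/p)) powr p"
      using inv B0 by (simp add: cos_pq_def y_def powr_minus divide_inverse)
    also have "\<dots> = 1 - y powr q" using B0 p0 by (simp add: powr_powr)
    finally have cosp: "cos_pq p q x powr p = 1 - y powr q" .
    have A: "(p + r * cos_pq p q x powr p) / (p + r) = 1 - c * y powr q"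
      using Aeq[of "-1" "y powr q"] cosp by simp
    have P: "\<forall>t\<in>{0..y}. 0 < 1 - c * t powr q"
    proof
      fix t assume t: "t \<in> {0..y}"
      then have "0 \<le> t powr q" "t powr q < 1" using pw_lt1[of t q] y assms(1) by auto
      then show "0 < 1 - c * t powr q" using cw_pos[OF c0 c1] by blast
    qed
    have "y * (1 - c * y powr q) powr (-1/q) < F_pq p q y"
    proof (rule comp[where \<phi>="\<lambda>t. (1 - t powr q) powr (-1/p)"])
      show "continuous_on {0..y} (F_pq p q)" using FF[of p] y by auto
      show "continuous_on {0..y} (\<lambda>t. t * (1 - c * t powr q) powr (-1/q))"
        using g_cont assms(1) P by blast
      fix t assume t: "0 < t" "t < y"
      show "(F_pq p q has_real_derivative (1 - t powr q) powr (-1/p)) (at t)" using FF[of p] t y by auto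
      show "(1 - c * t powr q) powr (-1/q-1) < (1 - t powr q) powr (-1/p)"
        using key_ineq[OF p0 assms(1) c0 c1 cK, of "t powr q"] pw_lt1[of t q] t y assms(1) by simp
    qed (use y assms(1) FF[of p] P g_deriv in auto)
    then have g: "y * (1 - c * y powr q) powr (-1/q) < x" using y by simp
    have Apos: "0 < 1 - c * y powr q" using P y by auto
    have "y / x < (1 - c * y powr q) powr (1/q)" by (rule fin[OF y(3) Apos g])
    then show "sin_pq p q x / x < ((p + r * cos_pq p q x powr p) / (p + r)) powr (1 / q)"
      unfolding A y_def[symmetric] .
  next
    fix x assume x: "0 < x \<and> ereal x < pi_pq r q / 2"
    moreover have "pi_pq r q / 2 = (SUP y\<in>{0..<1}. ereal (F_pq r q y))"
      unfolding pi_pq_def by (rule half_ereal)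
    ultimately have "ereal x < (SUP y\<in>{0..<1}. ereal (F_pq r q y))" by simp
    then obtain s where s: "s \<in> {0..<1}" "x < F_pq r q s" by (auto simp: less_SUP_iff)
    define tt where "tt t = t * (1 - t powr q) powr (-1/q)" for t
    have ttD: "(tt has_real_derivative (1 - t powr q) powr (-1/q - 1)) (at t)"
      if "0 < t" "0 < 1 - t powr q" for t
      using g_deriv[of q t 1] that assms(1) unfolding tt_def by simp
    have sub: "G_pq p q (tt s) = F_pq r q s"
    proof (cases "s = 0")
      case True then show ?thesis using GG FF[of r] by (simp add: tt_def)
    next
      case False
      then have s0: "0 < s" using s by simp
      have Ps: "\<forall>t\<in>{0..s}. 0 < 1 - 1 * t powr q"
      proof
        fix t assume t: "t \<in> {0..s}"
        then have "t powr q < 1" using pw_lt1[of t q] s assms(1) by auto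
        then show "0 < 1 - 1 * t powr q" by simp
      qed
      have ttc: "continuous_on {0..s} tt"
        using g_cont[OF assms(1) Ps] unfolding tt_def by simp
      have "compact (tt ` {0..s})" by (rule compact_continuous_image[OF ttc compact_Icc])
      then obtain M where M: "\<forall>z\<in>tt ` {0..s}. norm z \<le> M"
        using compact_imp_bounded bounded_iff by metis
      have tt0: "0 \<le> tt t" if "0 \<le> t" for t using that by (simp add: tt_def)
      have M0: "0 \<le> M" using M[rule_format, of "tt 0"] s0 by simp
      have img: "tt ` {0..s} \<subseteq> {0..M}" using M tt0 by auto
      have Gc: "continuous_on {0..s} (\<lambda>t. G_pq p q (tt t))"
        by (rule continuous_on_compose2[OF _ ttc img]) (use GG M0 in auto)
      have "(\<lambda>t. G_pq p q (tt t) - F_pq r q t) s = (\<lambda>t. G_pq p q (tt t) - F_pq r q t) 0"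
      proof (rule DERIV_isconst_end[OF s0])
        show "continuous_on {0..s} (\<lambda>t. G_pq p q (tt t) - F_pq r q t)"
          using Gc FF[of r] s by (intro continuous_on_diff) auto
        fix t assume t: "0 < t" "t < s"
        have B0: "0 < 1 - t powr q" using pw_lt1[of t q] t s assms(1) by simp
        have ttpos: "0 < tt t" using t B0 by (simp add: tt_def)
        have d1: "((\<lambda>t. G_pq p q (tt t)) has_real_derivative
            (1 + tt t powr q) powr (-1/p) * (1 - t powr q) powr (-1/q - 1)) (at t)"
          by (rule DERIV_chain2[OF _ ttD[OF t(1) B0]]) (use GG ttpos in auto)
        have d2: "(F_pq r q has_real_derivative (1 - t powr q) powr (-1/r)) (at t)"
          using FF[of r] t s by auto
        have eq: "(1 + tt t powr q) powr (-1/p) * (1 - t powr q) powr (-1/q - 1) = (1 - t powr q) powr (-1/r)"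
          unfolding tt_def by (rule subst_calc[OF t(1) assms(1) B0 rinv])
        show "((\<lambda>t. G_pq p q (tt t) - F_pq r q t) has_real_derivative 0) (at t)"
          using DERIV_diff[OF d1 d2] eq by simp
      qed
      then show ?thesis using GG FF[of r] by (simp add: tt_def)
    qed
    have inv: "sinh_pq p q x \<in> {0..} \<and> 0 < sinh_pq p q x \<and> G_pq p q (sinh_pq p q x) = x
       \<and> deriv (sinh_pq p q) x = 1 / (1 + sinh_pq p q x powr q) powr (-1/p)"
    proof (rule inv_fun[where S="{0..}" and \<Phi>="G_pq p q" and \<psi>="sinh_pq p q" and x=x and \<phi>="\<lambda>t. (1 + t powr q) powr (-1/p)" and ya="tt s"])
      show "tt s \<in> {0..}" using s by (simp add: tt_def)
      show "x < G_pq p q (tt s)" using sub s by simp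
    qed (use Sop2 GG x in \<open>auto simp: sinh_pq_def\<close>)
    define y where "y = sinh_pq p q x"
    have y: "0 \<le> y" "0 < y" "G_pq p q y = x" using inv by (auto simp: y_def)
    have B0: "0 < 1 + y powr q"
    proof -
      have "0 \<le> y powr q" by simp
      then show ?thesis by linarith
    qed
    have "cosh_pq p q x powr p = ((1 + y powr q) powr (1/p)) powr p"
      using inv B0 by (simp add: cosh_pq_def y_def powr_minus divide_inverse)
    also have "\<dots> = 1 + y powr q" using B0 p0 by (simp add: powr_powr)
    finally have coshp: "cosh_pq p q x powr p = 1 + y powr q" .
    have A: "(p + r * cosh_pq p q x powr p) / (p + r) = 1 - (- c) * y powr q"
      using Aeq[of "1" "y powr q"] coshp by simp
    have P: "\<forall>t\<in>{0..y}. 0 < 1 - (- c) * t powr q"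
      using c0 by (auto intro!: add_pos_nonneg)
    have "y * (1 - (- c) * y powr q) powr (-1/q) < G_pq p q y"
    proof (rule comp[where \<phi>="\<lambda>t. (1 + t powr q) powr (-1/p)"])
      show "continuous_on {0..y} (G_pq p q)" using GG y by auto
      show "continuous_on {0..y} (\<lambda>t. t * (1 - (- c) * t powr q) powr (-1/q))"
        using g_cont assms(1) P by blast
      show "\<And>t. 0 < t \<Longrightarrow> 0 < 1 - (- c) * t powr q \<Longrightarrow>
        ((\<lambda>t. t * (1 - (- c) * t powr q) powr (-1/q)) has_real_derivative
           (1 - (- c) * t powr q) powr (-1/q - 1)) (at t)"
        by (rule g_deriv[OF assms(1)])
      fix t assume t: "0 < t" "t < y"
      show "(G_pq p q has_real_derivative (1 + t powr q) powr (-1/p)) (at t)" using GG t by auto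
      have "0 < t powr q" using t by simp
      then have "- 1 < t powr q" by linarith
      moreover have "t \<noteq> 0" using t by simp
      ultimately show "(1 - (- c) * t powr q) powr (-1/q-1) < (1 + t powr q) powr (-1/p)"
        using key_ineq[OF p0 assms(1) c0 c1 cK, of "- (t powr q)"] by simp
    qed (use y assms(1) GG P g_deriv in auto)
    then have g: "y * (1 - (- c) * y powr q) powr (-1/q) < x" using y by simp
    have Apos: "0 < 1 - (- c) * y powr q" using P y by auto
    have "y / x < (1 - (- c) * y powr q) powr (1/q)" by (rule fin[OF y(2) Apos g])
    then show "sinh_pq p q x / x < ((p + r * cosh_pq p q x powr p) / (p + r)) powr (1 / q)"
      unfolding A y_def[symmetric] .
  qed
qed

end
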